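(* Let $f:\mathbb{R}^n\to\mathbb{R}$ be locally Lipschitz continuous at $\bar x$ with local Lipschitz modulus $0$, i.e. $\limsup_{x,x'\to\bar x,\,x\ne x'}|f(x)-f(x')|/\|x-x'\|=0$. Then $\mathrm{epi}\, f=\{(x,t):t\ge f(x)\}$ is smoothly approximately convex at $(\bar x,\bar s)$ for every $\bar s\ge f(\bar x)$.
   Context: A set $C\subseteq\mathbb{R}^N$ is smoothly approximately convex at $\bar z\in C$ if for every $\epsilon>0$ there is a neighborhood $W$ of $\bar z$ such that for all $z,z'\in C\cap W$ there is a map $\gamma:[0,1]\to C$, extending to a $\mathcal{C}^{(1)}$ map on an open neighborhood of $[0,1]$, with $\gamma(0)=z,\gamma(1)=z'$ and $\|\gamma'(t)-(z'-z)\|\le\epsilon\|z'-z\|$ for all $t\in[0,1]$. *)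

theory Defs
  imports "HOL-Analysis.Analysis"
begin

text \<open>Local Lipschitz modulus of f at xbar equals 0:
  limsup_{x,x' -> xbar, x ~= x'} |f x - f x'| / norm (x - x') = 0,
  written out with epsilon/delta (the quotient is nonnegative).\<close>
definition lip_modulus_zero :: "('a::real_normed_vector \<Rightarrow> real) \<Rightarrow> 'a \<Rightarrow> bool" where
  "lip_modulus_zero f xbar \<longleftrightarrow>
     (\<forall>\<epsilon>>0. \<exists>\<delta>>0. \<forall>x\<in>ball xbar \<delta>. \<forall>x'\<in>ball xbar \<delta>. x \<noteq> x' \<longrightarrow>
        \<bar>f x - f x'\<bar> / norm (x - x') \<le> \<epsilon>)"

definition epigraph :: "('a \<Rightarrow> real) \<Rightarrow> ('a \<times> real) set" where
  "epigraph f = {(x, t). f x \<le> t}"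

text \<open>The curve gamma is given on all of
  the reals; it is required to be C^1 on an open set U containing [0,1], and its
  restriction to [0,1] is the path of the paper.\<close>
definition smoothly_approx_convex :: "'a::euclidean_space set \<Rightarrow> 'a \<Rightarrow> bool" where
  "smoothly_approx_convex C zbar \<longleftrightarrow> zbar \<in> C \<and>
     (\<forall>\<epsilon>>0. \<exists>W. open W \<and> zbar \<in> W \<and>
        (\<forall>z\<in>C \<inter> W. \<forall>z'\<in>C \<inter> W. \<exists>\<gamma> :: real \<Rightarrow> 'a.
           \<gamma> ` {0..1} \<subseteq> C \<and> \<gamma> 0 = z \<and> \<gamma> 1 = z' \<and>
           (\<exists>U \<gamma>'. open U \<and> {0..1} \<subseteq> U \<and>
              (\<forall>t\<in>U. (\<gamma> has_vector_derivative \<gamma>' t) (at t)) \<and> continuous_on U \<gamma>' \<and>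
              (\<forall>t\<in>{0..1}. norm (\<gamma>' t - (z' - z)) \<le> \<epsilon> * norm (z' - z)))))"

end

theory Submission
  imports Defs
begin

lemma lipz_bound:
  assumes "lip_modulus_zero f xbar" "e > 0"
  obtains d where "d > 0" "\<And>a b. a \<in> ball xbar d \<Longrightarrow> b \<in> ball xbar d \<Longrightarrow> \<bar>f a - f b\<bar> \<le> e * norm (a - b)"
proof -
  obtain d where d: "d > 0" "\<forall>x\<in>ball xbar d. \<forall>x'\<in>ball xbar d. x \<noteq> x' \<longrightarrow>
        \<bar>f x - f x'\<bar> / norm (x - x') \<le> e"
    using assms unfolding lip_modulus_zero_def by blast
  have "\<bar>f a - f b\<bar> \<le> e * norm (a - b)" if "a \<in> ball xbar d" "b \<in> ball xbar d" for a b
  proof (cases "a = b")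
    case True then show ?thesis by simp
  next
    case False
    then have "norm (a - b) > 0" by simp
    with d(2) that False show ?thesis by (auto simp: divide_le_eq mult.commute)
  qed
  then show ?thesis using d(1) that by blast
qed

lemma path_deriv:
  fixes z v :: "'n::euclidean_space \<times> real"
  shows "((\<lambda>s. z + s *\<^sub>R v + (c * (s - s^2)) *\<^sub>R (0, 1)) has_vector_derivative
      (v + (c * (1 - 2 * s)) *\<^sub>R (0, 1))) (at s)"
  unfolding has_vector_derivative_def
  by (auto intro!: derivative_eq_intros simp: algebra_simps power2_eq_square)

theorem proposition3p4:
  fixes f :: "'n::euclidean_space \<Rightarrow> real" and xbar :: 'n and sbar :: real
  assumes "lip_modulus_zero f xbar"
    and "sbar \<ge> f xbar"
  shows "smoothly_approx_convex (epigraph f) (xbar, sbar)"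
  unfolding smoothly_approx_convex_def
proof (intro conjI allI impI)
  show "(xbar, sbar) \<in> epigraph f" using assms(2) by (simp add: epigraph_def)
  fix \<epsilon> :: real assume ep: "\<epsilon> > 0"
  obtain d where d: "d > 0" "\<And>a b. a \<in> ball xbar d \<Longrightarrow> b \<in> ball xbar d \<Longrightarrow> \<bar>f a - f b\<bar> \<le> (\<epsilon>/2) * norm (a - b)"
    using lipz_bound[OF assms(1), of "\<epsilon>/2"] ep by auto
  show "\<exists>W. open W \<and> (xbar, sbar) \<in> W \<and>
        (\<forall>z\<in>epigraph f \<inter> W. \<forall>z'\<in>epigraph f \<inter> W. \<exists>\<gamma> :: real \<Rightarrow> 'n \<times> real.
           \<gamma> ` {0..1} \<subseteq> epigraph f \<and> \<gamma> 0 = z \<and> \<gamma> 1 = z' \<and>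
           (\<exists>U \<gamma>'. open U \<and> {0..1} \<subseteq> U \<and>
              (\<forall>t\<in>U. (\<gamma> has_vector_derivative \<gamma>' t) (at t)) \<and> continuous_on U \<gamma>' \<and>
              (\<forall>t\<in>{0..1}. norm (\<gamma>' t - (z' - z)) \<le> \<epsilon> * norm (z' - z))))"
  proof (rule exI[of _ "ball (xbar, sbar) d"], intro conjI ballI)
    show "open (ball (xbar, sbar) d)" by simp
    show "(xbar, sbar) \<in> ball (xbar, sbar) d" using d(1) by simp
    fix z z' assume z: "z \<in> epigraph f \<inter> ball (xbar, sbar) d" and z': "z' \<in> epigraph f \<inter> ball (xbar, sbar) d"
    obtain x t where zx: "z = (x, t)" by (cases z)
    obtain x' t' where zx': "z' = (x', t')" by (cases z')
    have ft: "f x \<le> t" "f x' \<le> t'" using z z' zx zx' by (auto simp: epigraph_def)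
    have xb: "x \<in> ball xbar d" using z zx norm_fst_le[of "xbar - x" "sbar - t"] by (auto simp: dist_norm)
    have xb': "x' \<in> ball xbar d" using z' zx' norm_fst_le[of "xbar - x'" "sbar - t'"] by (auto simp: dist_norm)
    define D where "D = norm (x' - x)"
    define c where "c = \<epsilon> * D"
    have Dle: "D \<le> norm (z' - z)" using norm_fst_le[of "x' - x" "t' - t"] zx zx' by (simp add: D_def)
    have D0: "D \<ge> 0" by (simp add: D_def)
    let ?g = "\<lambda>s. z + s *\<^sub>R (z' - z) + (c * (s - s^2)) *\<^sub>R ((0::'n), (1::real))"
    let ?g' = "\<lambda>s. (z' - z) + (c * (1 - 2 * s)) *\<^sub>R ((0::'n), (1::real))"
    show "\<exists>\<gamma> :: real \<Rightarrow> 'n \<times> real.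
           \<gamma> ` {0..1} \<subseteq> epigraph f \<and> \<gamma> 0 = z \<and> \<gamma> 1 = z' \<and>
           (\<exists>U \<gamma>'. open U \<and> {0..1} \<subseteq> U \<and>
              (\<forall>t\<in>U. (\<gamma> has_vector_derivative \<gamma>' t) (at t)) \<and> continuous_on U \<gamma>' \<and>
              (\<forall>t\<in>{0..1}. norm (\<gamma>' t - (z' - z)) \<le> \<epsilon> * norm (z' - z)))"
    proof (rule exI[of _ ?g], intro conjI exI[of _ UNIV] exI[of _ ?g'] ballI)
      show "?g ` {0..1} \<subseteq> epigraph f"
      proof
        fix y assume "y \<in> ?g ` {0..1}"
        then obtain s where s: "0 \<le> s" "s \<le> 1" "y = ?g s" by auto
        define p where "p = x + s *\<^sub>R (x' - x)"
        have pe: "p = (1 - s) *\<^sub>R x + s *\<^sub>R x'" by (simp add: p_def algebra_simps)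
        have pb: "p \<in> ball xbar d"
          using convex_ball[of xbar d] xb xb' s unfolding convex_def pe by auto
        have n1: "norm (p - x) = s * D" using s by (simp add: p_def D_def)
        have n2: "norm (p - x') = (1 - s) * D"
        proof -
          have "p - x' = (1 - s) *\<^sub>R (x - x')" by (simp add: p_def algebra_simps)
          then show ?thesis using s by (simp add: D_def norm_minus_commute)
        qed
        have b1: "f p \<le> t + (\<epsilon>/2) * (s * D)" using d(2)[OF pb xb] ft unfolding n1 by linarith
        have b2: "f p \<le> t' + (\<epsilon>/2) * ((1 - s) * D)" using d(2)[OF pb xb'] ft unfolding n2 by linarith
        have "f p = (1 - s) * f p + s * f p" by (simp add: algebra_simps)
        also have "\<dots> \<le> (1 - s) * (t + (\<epsilon>/2) * (s * D)) + s * (t' + (\<epsilon>/2) * ((1 - s) * D))"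
          using s b1 b2 by (intro add_mono mult_left_mono) auto
        also have "\<dots> = t + s * (t' - t) + c * (s - s^2)"
          by (simp add: c_def algebra_simps power2_eq_square)
        finally have "f p \<le> t + s * (t' - t) + c * (s - s^2)" .
        moreover have "y = (p, t + s * (t' - t) + c * (s - s^2))"
          using s(3) zx zx' by (simp add: p_def)
        ultimately show "y \<in> epigraph f" by (simp add: epigraph_def)
      qed
      show "?g 0 = z" by (simp add: prod_eq_iff)
      show "?g 1 = z'" by (simp add: prod_eq_iff)
      show "open (UNIV :: real set)" by simp
      show "{0..1} \<subseteq> (UNIV :: real set)" by simp
      fix s :: real
      show "(?g has_vector_derivative ?g' s) (at s)" by (rule path_deriv)
    next
      show "continuous_on UNIV ?g'" by (intro continuous_intros)
    next
      fix s :: real assume s: "s \<in> {0..1}"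
      have e1: "?g' s - (z' - z) = (c * (1 - 2 * s)) *\<^sub>R ((0::'n), (1::real))" by simp
      have "norm (?g' s - (z' - z)) = \<bar>c\<bar> * \<bar>1 - 2 * s\<bar>"
        unfolding e1 norm_scaleR by (simp add: norm_Pair abs_mult)
      also have "\<dots> \<le> \<bar>c\<bar> * 1" using s by (intro mult_left_mono) auto
      also have "\<dots> = \<epsilon> * D" using ep D0 by (simp add: c_def abs_mult)
      also have "\<dots> \<le> \<epsilon> * norm (z' - z)" using Dle ep by simp
      finally show "norm (?g' s - (z' - z)) \<le> \<epsilon> * norm (z' - z)" .
    qed
  qed
qed

end
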